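(* For integers $j,k,n\ge 0$ let $$a_n(j,k)=\binom{n}{j}^2\binom{n}{k}^2\binom{n+j}{n}\binom{n+k}{n}\binom{j+k}{n}.$$ Then for all integers $n\ge 1$ and $j,k\ge 0$: (a) $v_2\big(a_n(j,k)\big)=1$ if and only if $\{j,k\}=\{0,n\}$ and $n$ is a power of $2$; (b) $v_2\big(a_n(j,k)\big)\ge 2$ otherwise.
   Context: $v_2$ denotes the $2$-adic valuation on the integers, with the convention $v_2(0)=+\infty$. Binomial coefficients $\binom{a}{b}$ with $b>a\ge 0$ are $0$. "Power of $2$" means $2^m$ for some integer $m\ge 0$ (so $n=1$ is included). *)

theory Defs
  imports Main "HOL-Library.Extended_Nat" "HOL-Computational_Algebra.Primes"
begin

definition v2 :: "nat \<Rightarrow> enat" where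
  "v2 m = (if m = 0 then \<infinity> else enat (multiplicity (2::nat) m))"

definition a :: "nat \<Rightarrow> nat \<Rightarrow> nat \<Rightarrow> nat" where
  "a n j k = (n choose j)^2 * (n choose k)^2 * ((n + j) choose n) * ((n + k) choose n)
             * ((j + k) choose n)"

end

theory Submission
  imports Defs
begin

fun bs :: "nat \<Rightarrow> nat" where
  "bs n = (if n = 0 then 0 else n mod 2 + bs (n div 2))"

declare bs.simps[simp del]

lemma bs0[simp]: "bs 0 = 0" by (simp add: bs.simps)
lemma bs_even[simp]: "bs (2*q) = bs q"
  by (cases "q = 0") (simp_all add: bs.simps[of "2*q"])
lemma bs_odd[simp]: "bs (Suc (2*q)) = Suc (bs q)"
  by (simp add: bs.simps[of "Suc (2*q)"])

lemma bs_pos: "n \<ge> 1 \<Longrightarrow> bs n \<ge> 1"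
proof (induction n rule: less_induct)
  case (less n)
  show ?case
  proof (cases "even n")
    case True
    then obtain q where n: "n = 2*q" by blast
    have "q \<ge> 1" "q < n" using less.prems n by auto
    then have "bs q \<ge> 1" using less.IH by blast
    then show ?thesis unfolding n bs_even .
  next
    case False
    then obtain q where n: "n = Suc (2*q)" by (metis oddE Suc_eq_plus1)
    show ?thesis unfolding n bs_odd by simp
  qed
qed

lemma p2: "prime_elem (2::nat)"
  by (rule prime_imp_prime_elem[OF two_is_prime_nat])

lemma bs_step: "bs (Suc m) + multiplicity (2::nat) (Suc m) = Suc (bs m)"
proof (induction m rule: less_induct)
  case (less m)
  show ?case
  proof (cases "even m")
    case True
    then obtain q where q: "m = 2*q" by blast
    have "\<not> (2::nat) dvd Suc m" using True by simp
    then have "multiplicity 2 (Suc m) = 0" by (rule not_dvd_imp_multiplicity_0)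
    then show ?thesis using q by (simp del: bs_odd add: bs_odd[of q, simplified])
  next
    case False
    then obtain q where q: "m = 2*q+1" using oddE by blast
    have IH: "bs (Suc q) + multiplicity (2::nat) (Suc q) = Suc (bs q)" using less.IH q by simp
    have e: "Suc m = 2 * Suc q" using q by simp
    have "multiplicity (2::nat) (2 * Suc q) = Suc (multiplicity 2 (Suc q))"
      by (rule multiplicity_times_same) auto
    then have m2: "multiplicity (2::nat) (Suc m) = Suc (multiplicity 2 (Suc q))" using e by simp
    have b1: "bs (Suc m) = bs (Suc q)" by (metis bs_even e)
    have b2: "bs m = Suc (bs q)" using q by simp
    show ?thesis using IH m2 b1 b2 by linarith
  qed
qed

lemma fact_mult: "multiplicity (2::nat) (fact m :: nat) + bs m = m"
proof (induction m)
  case 0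
  then show ?case by simp
next
  case (Suc m)
  have f: "(fact (Suc m) :: nat) = Suc m * fact m" by simp
  have "multiplicity (2::nat) (fact (Suc m)) = multiplicity 2 (Suc m) + multiplicity 2 (fact m :: nat)"
    unfolding f by (rule prime_elem_multiplicity_mult_distrib[OF p2]) auto
  then show ?case using Suc bs_step[of m] by simp
qed

lemma choose_mult: "multiplicity (2::nat) ((x+y) choose x) + bs (x+y) = bs x + bs y"
proof -
  have "fact x * fact y * ((x+y) choose x) = (fact (x+y) :: nat)"
    using binomial_fact_lemma[of x "x+y"] by simp
  then have "multiplicity (2::nat) (fact x) + multiplicity (2::nat) (fact y) + multiplicity 2 ((x+y) choose x)
      = multiplicity (2::nat) (fact (x+y))"
  proof -
    have nz: "((x+y) choose x) \<noteq> 0" by simp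
    have "multiplicity (2::nat) (fact x * fact y * ((x+y) choose x)) = multiplicity (2::nat) (fact x * fact y) + multiplicity 2 ((x+y) choose x)"
      by (rule prime_elem_multiplicity_mult_distrib[OF p2]) (simp_all add: nz)
    moreover have "multiplicity (2::nat) (fact x * fact y) = multiplicity 2 (fact x :: nat) + multiplicity 2 (fact y :: nat)"
      by (rule prime_elem_multiplicity_mult_distrib[OF p2]) simp_all
    moreover have "multiplicity (2::nat) (fact (x+y)) = multiplicity (2::nat) (fact x * fact y * ((x+y) choose x))"
      by (simp only: \<open>fact x * fact y * ((x+y) choose x) = (fact (x+y) :: nat)\<close>)
    ultimately show ?thesis by linarith
  qed
  then show ?thesis using fact_mult[of x] fact_mult[of y] fact_mult[of "x+y"] by linarith
qed

lemma bs_add: "bs (x+y) \<le> bs x + bs y"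
  using choose_mult[of x y] by linarith

lemma bs_pow: "bs (2^m) = 1"
proof (induction m)
  case 0
  then show ?case by (simp add: bs.simps[of "Suc 0"])
next
  case (Suc m)
  have "bs (2^Suc m) = bs (2 * 2^m)" by simp
  also have "\<dots> = bs (2^m)" by (rule bs_even)
  finally show ?case using Suc by simp
qed

lemma bs_one_imp: "bs n = 1 \<Longrightarrow> \<exists>m. n = 2^m"
proof (induction n rule: less_induct)
  case (less n)
  show ?case
  proof (cases "even n")
    case True
    then obtain q where n: "n = 2*q" by blast
    have bq: "bs q = 1" using less.prems unfolding n bs_even .
    have "q \<noteq> 0" using bq by (metis bs0 zero_neq_one)
    then have "q < n" using n by simp
    then obtain m where "q = 2^m" using less.IH bq by blast
    then have "n = 2^Suc m" using n by simp
    then show ?thesis by blast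
  next
    case False
    then obtain q where n: "n = Suc (2*q)" by (metis oddE Suc_eq_plus1)
    have "Suc (bs q) = 1" using less.prems unfolding n bs_odd .
    then have "bs q = 0" by simp
    then have "q = 0" using bs_pos[of q] by (cases "q = 0") auto
    then have "n = 2^0" using n by simp
    then show ?thesis by blast
  qed
qed

lemma bs_one: "bs n = 1 \<longleftrightarrow> (\<exists>m. n = 2^m)"
  using bs_one_imp bs_pow by blast

lemma md: "x \<noteq> 0 \<Longrightarrow> y \<noteq> 0 \<Longrightarrow> multiplicity (2::nat) (x*y) = multiplicity 2 x + multiplicity 2 y"
  by (rule prime_elem_multiplicity_mult_distrib[OF p2])

lemma mp2: "multiplicity (2::nat) (x^2) = 2 * multiplicity 2 x"
proof (cases "x = 0")
  case True then show ?thesis by simp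
next
  case False then show ?thesis by (simp add: power2_eq_square md)
qed

lemma md5:
  fixes x1 x2 x3 x4 x5 :: nat
  assumes "x1 \<noteq> 0" "x2 \<noteq> 0" "x3 \<noteq> 0" "x4 \<noteq> 0" "x5 \<noteq> 0"
  shows "multiplicity (2::nat) (x1^2*x2^2*x3*x4*x5) = 2*multiplicity 2 x1 + 2*multiplicity 2 x2
     + multiplicity 2 x3 + multiplicity 2 x4 + multiplicity 2 x5"
  using assms by (simp add: md mp2)

lemma key:
  assumes "j \<le> n" "1 \<le> j" "multiplicity (2::nat) (n choose j) = 0"
  shows "multiplicity (2::nat) ((n+j) choose n) \<ge> 1"
proof -
  have e1: "n = j + (n-j)" using assms by simp
  have "multiplicity (2::nat) ((j + (n-j)) choose j) + bs (j+(n-j)) = bs j + bs (n-j)" by (rule choose_mult)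
  then have h1: "bs n = bs j + bs (n-j)" using assms(3) e1 by simp
  have h2: "multiplicity (2::nat) ((n+j) choose n) + bs (n+j) = bs n + bs j" by (rule choose_mult)
  have "bs (n+j) = bs (2*j + (n-j))" using assms by (simp add: algebra_simps)
  also have "\<dots> \<le> bs (2*j) + bs (n-j)" by (rule bs_add)
  finally have "bs (n+j) \<le> bs n" using h1 by simp
  moreover have "bs j \<ge> 1" using bs_pos assms by simp
  ultimately show ?thesis using h2 by linarith
qed

lemma S_cases: "{j,k} = {0,n} \<Longrightarrow> (n::nat) \<ge> 1 \<Longrightarrow> (j = 0 \<and> k = n) \<or> (j = n \<and> k = 0)"
  by (auto simp: doubleton_eq_iff)

lemma a_S: "{j,k} = {0,n} \<Longrightarrow> (n::nat) \<ge> 1 \<Longrightarrow> a n j k = ((n+n) choose n)"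
  using S_cases[of j k n] by (auto simp: a_def)

lemma bs_2n: "multiplicity (2::nat) ((n+n) choose n) = bs n"
proof -
  have "multiplicity (2::nat) ((n+n) choose n) + bs (n+n) = bs n + bs n" by (rule choose_mult)
  moreover have "bs (n+n) = bs n" using bs_even[of n] by (simp add: mult_2)
  ultimately show ?thesis by simp
qed

theorem mainTheorem1:
  fixes n j k :: nat
  assumes "n \<ge> 1"
  shows "(v2 (a n j k) = 1 \<longleftrightarrow> ({j, k} = {0, n} \<and> (\<exists>m::nat. n = 2 ^ m)))
         \<and> (\<not> ({j, k} = {0, n} \<and> (\<exists>m::nat. n = 2 ^ m)) \<longrightarrow> v2 (a n j k) \<ge> 2)"
proof (cases "{j, k} = {0, n}")
  case S: True
  have "a n j k = ((n+n) choose n)" using a_S[OF S assms] .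
  then have v: "v2 (a n j k) = enat (bs n)" by (simp add: v2_def bs_2n)
  have "bs n \<ge> 1" using bs_pos assms by simp
  have e1: "enat (bs n) = 1 \<longleftrightarrow> bs n = 1" by (simp add: one_enat_def)
  have e2: "bs n \<noteq> 1 \<Longrightarrow> enat (bs n) \<ge> 2" using \<open>bs n \<ge> 1\<close> by (simp add: numeral_eq_enat)
  show ?thesis unfolding v using S bs_one[of n] e1 e2 by blast
next
  case NS: False
  have ge2: "v2 (a n j k) \<ge> 2"
  proof (cases "a n j k = 0")
    case True
    then show ?thesis by (simp add: v2_def)
  next
    case False
    then have "(n choose j)^2 * (n choose k)^2 * ((n + j) choose n) * ((n + k) choose n)
             * ((j + k) choose n) \<noteq> 0" unfolding a_def .
    then have nz: "(n choose j) \<noteq> 0" "(n choose k) \<noteq> 0" "((n+j) choose n) \<noteq> 0"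
      "((n+k) choose n) \<noteq> 0" "((j+k) choose n) \<noteq> 0"
      by (simp_all only: mult_eq_0_iff power_eq_0_iff de_Morgan_disj zero_less_numeral simp_thms)
    have jn: "j \<le> n" "k \<le> n" "n \<le> j + k"
      using nz(1) nz(2) nz(5) by (simp_all only: binomial_eq_0_iff not_less)
    have M: "multiplicity (2::nat) (a n j k) = 2 * multiplicity 2 (n choose j) + 2 * multiplicity 2 (n choose k)
       + multiplicity 2 ((n+j) choose n) + multiplicity 2 ((n+k) choose n) + multiplicity 2 ((j+k) choose n)"
      unfolding a_def by (rule md5[OF nz])
    have j1: "j \<ge> 1"
    proof (rule ccontr)
      assume "\<not> j \<ge> 1"
      then have "j = 0" by simp
      then have "k = n" using jn by simp
      then show False using NS \<open>j = 0\<close> by simp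
    qed
    have k1: "k \<ge> 1"
    proof (rule ccontr)
      assume "\<not> k \<ge> 1"
      then have "k = 0" by simp
      then have "j = n" using jn by simp
      then show False using NS \<open>k = 0\<close> by auto
    qed
    have A: "2 * multiplicity (2::nat) (n choose j) + multiplicity 2 ((n+j) choose n) \<ge> 1"
      using key[OF jn(1) j1] by (cases "multiplicity (2::nat) (n choose j) = 0") auto
    have B: "2 * multiplicity (2::nat) (n choose k) + multiplicity 2 ((n+k) choose n) \<ge> 1"
      using key[OF jn(2) k1] by (cases "multiplicity (2::nat) (n choose k) = 0") auto
    have "multiplicity (2::nat) (a n j k) \<ge> 2" using M A B by linarith
    then show ?thesis using False by (simp add: v2_def)
  qed
  then have "v2 (a n j k) \<noteq> 1" by (cases "v2 (a n j k)") (simp_all add: one_enat_def numeral_eq_enat)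
  then show ?thesis using NS ge2 by blast
qed

end
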